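(* $m(3)=10$; that is, the smallest number of edges of a minimal uncolorable $3$-uniform bi-hypergraph is $10$.
   Context: A bi-hypergraph $\mathcal H=(V,E)$ consists of a finite vertex set $V$ and a set $E$ of subsets of $V$, called edges, with no edge contained in another. It is $r$-uniform if every edge has exactly $r$ elements. A mapping $f:V\to\mathbb N$ is a proper coloring of $\mathcal H$ if $1<|f(e)|<|e|$ for every $e\in E$, where $f(e)=\{f(v):v\in e\}$. $\mathcal H$ is colorable if it has a proper coloring, and uncolorable otherwise. A subhypergraph of $\mathcal H$ is a bi-hypergraph $(V',E')$ with $V'\subseteq V$, $E'\subseteq E$. $\mathcal H$ is minimal uncolorable if it is uncolorable but every proper subhypergraph of it is colorable. $m(r)$ denotes the smallest positive integer $m$ for which there exists a minimal uncolorable $r$-uniform bi-hypergraph with exactly $m$ edges. *)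

theory Defs
  imports Main
begin

definition bi_hypergraph :: "'a set \<Rightarrow> 'a set set \<Rightarrow> bool" where
  "bi_hypergraph V E \<longleftrightarrow> finite V \<and> (\<forall>e\<in>E. e \<subseteq> V)
     \<and> (\<forall>e\<in>E. \<forall>e'\<in>E. e \<subseteq> e' \<longrightarrow> e = e')"

definition uniform :: "nat \<Rightarrow> 'a set set \<Rightarrow> bool" where
  "uniform r E \<longleftrightarrow> (\<forall>e\<in>E. card e = r)"

definition proper_coloring :: "'a set set \<Rightarrow> ('a \<Rightarrow> nat) \<Rightarrow> bool" where
  "proper_coloring E f \<longleftrightarrow> (\<forall>e\<in>E. 1 < card (f ` e) \<and> card (f ` e) < card e)"

definition colorable :: "'a set \<Rightarrow> 'a set set \<Rightarrow> bool" where
  "colorable V E \<longleftrightarrow> (\<exists>f :: 'a \<Rightarrow> nat. proper_coloring E f)"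

definition subhypergraph :: "'a set \<Rightarrow> 'a set set \<Rightarrow> 'a set \<Rightarrow> 'a set set \<Rightarrow> bool" where
  "subhypergraph V' E' V E \<longleftrightarrow> bi_hypergraph V' E' \<and> V' \<subseteq> V \<and> E' \<subseteq> E"

definition minimal_uncolorable :: "'a set \<Rightarrow> 'a set set \<Rightarrow> bool" where
  "minimal_uncolorable V E \<longleftrightarrow> bi_hypergraph V E \<and> \<not> colorable V E
     \<and> (\<forall>V' E'. subhypergraph V' E' V E \<and> (V', E') \<noteq> (V, E) \<longrightarrow> colorable V' E')"

text \<open>m(r): least positive m such that some minimal uncolorable r-uniform
  bi-hypergraph has exactly m edges (vertices taken from nat, which loses no
  generality since vertex sets are finite).\<close>
definition m_min :: "nat \<Rightarrow> nat" where
  "m_min r = (LEAST m. 0 < m \<and> (\<exists>(V :: nat set) E. minimal_uncolorable V E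
                 \<and> uniform r E \<and> card E = m))"

end

theory Submission
  imports Defs
begin

lemma card3_split:
  assumes "card e = 3" "x \<in> e" "y \<in> e" "x \<noteq> y"
  shows "\<exists>z. e = {x,y,z} \<and> z \<noteq> x \<and> z \<noteq> y"
proof -
  have fe: "finite e" using assms(1) card.infinite by fastforce
  have "card (e - {x,y}) = 1" using assms fe by (subst card_Diff_subset) auto
  then obtain z where z: "e - {x,y} = {z}" using card_1_singletonE by blast
  hence "e = {x,y,z}" using assms by blast
  moreover have "z \<noteq> x \<and> z \<noteq> y" using z by blast
  ultimately show ?thesis by blast
qed

lemma double_count:
  assumes "finite V" "finite E" "\<forall>e\<in>E. e \<subseteq> V"
  shows "(\<Sum>z\<in>V. card {e\<in>E. z\<in>e}) = (\<Sum>e\<in>E. card e)"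
proof -
  have "(\<Sum>z\<in>V. card {e\<in>E. z\<in>e}) = (\<Sum>z\<in>V. \<Sum>e\<in>{e\<in>E. z\<in>e}. (1::nat))" by simp
  also have "\<dots> = (\<Sum>e\<in>E. \<Sum>z\<in>{z\<in>V. z\<in>e}. (1::nat))"
    using sum.swap_restrict[OF assms(1,2), of "\<lambda>_ _. (1::nat)" "\<lambda>z e. z \<in> e"] by simp
  also have "\<dots> = (\<Sum>e\<in>E. card e)"
  proof (rule sum.cong)
    fix e assume "e \<in> E"
    hence "{z\<in>V. z\<in>e} = e" using assms(3) by blast
    thus "(\<Sum>z\<in>{z\<in>V. z\<in>e}. (1::nat)) = card e" by simp
  qed simp
  finally show ?thesis .
qed

lemma case1:
  assumes sub: "\<forall>e\<in>E. e \<subseteq> insert v W" and vW: "v \<notin> W" and TW: "T \<subseteq> W"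
    and cT: "card T = 3" and cWT: "card (W - T) = 3" and fW: "finite W"
    and nT: "T \<notin> E" and nWT: "W - T \<notin> E" and c3: "\<forall>e\<in>E. card e = 3"
    and ve: "\<forall>e\<in>E. v \<in> e \<longrightarrow> \<not> (e - {v} \<subseteq> T)"
  shows "proper_coloring E (\<lambda>z. if z \<in> insert v T then 0::nat else 1)"
  unfolding proper_coloring_def
proof
  fix e assume eE: "e \<in> E"
  let ?f = "(\<lambda>z. if z \<in> insert v T then 0::nat else 1)"
  have "?f ` e = {0,1}"
  proof (cases "v \<in> e")
    case True
    then obtain z where "z \<in> e" "z \<noteq> v" "z \<notin> T" using ve eE by blast
    moreover have "z \<in> W" using sub eE calculation by blast
    ultimately have "1 \<in> ?f ` e" using vW by (metis (mono_tags, lifting) image_eqI insertE)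
    moreover have "0 \<in> ?f ` e" using True by force
    ultimately show ?thesis by auto
  next
    case False
    hence eW: "e \<subseteq> W" using sub eE by blast
    have ce: "card e = 3" using c3 eE by blast
    have "\<not> e \<subseteq> W - T"
    proof
      assume "e \<subseteq> W - T"
      hence "e = W - T" using card_subset_eq[of "W - T" e] fW ce cWT by auto
      thus False using nWT eE by blast
    qed
    then obtain z where z: "z \<in> e" "z \<in> T" using eW by blast
    have "\<not> e \<subseteq> T"
    proof
      assume "e \<subseteq> T"
      hence "e = T" using card_subset_eq[of T e] fW TW ce cT finite_subset by metis
      thus False using nT eE by blast
    qed
    then obtain y where y: "y \<in> e" "y \<notin> T" by blast
    have "y \<noteq> v" using False y by blast
    have "0 \<in> ?f ` e" using z by force
    moreover have "1 \<in> ?f ` e" using y \<open>y \<noteq> v\<close> by force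
    ultimately show ?thesis by auto
  qed
  thus "1 < card (?f ` e) \<and> card (?f ` e) < card e" using c3 eE by simp
qed

lemma case2:
  assumes sub: "\<forall>e\<in>E. e \<subseteq> insert v (U \<union> r)" and vU: "v \<notin> U \<union> r" and dis: "U \<inter> r = {}"
    and cr: "card r = 2" and nU: "\<forall>e\<in>E. \<not> e \<subseteq> U" and c3: "\<forall>e\<in>E. card e = 3"
    and ve: "\<forall>e\<in>E. v \<in> e \<longrightarrow> (e - {v} \<subseteq> U \<or> e - {v} = r)"
  shows "proper_coloring E (\<lambda>z. if z = v then 2::nat else if z \<in> U then 0 else 1)"
  unfolding proper_coloring_def
proof
  fix e assume eE: "e \<in> E"
  let ?f = "(\<lambda>z. if z = v then 2::nat else if z \<in> U then 0 else 1)"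
  have ce: "card e = 3" using c3 eE by blast
  have "card (?f ` e) = 2"
  proof (cases "v \<in> e")
    case True
    have "e - {v} \<noteq> {}"
    proof
      assume "e - {v} = {}"
      hence "e \<subseteq> {v}" by blast
      hence "card e \<le> 1" using card_mono[of "{v}" e] by simp
      thus False using ce by simp
    qed
    then obtain z where z: "z \<in> e" "z \<noteq> v" by blast
    show ?thesis
    proof (cases "e - {v} \<subseteq> U")
      case True2: True
      have "?f ` e = {2,0}"
      proof
        show "?f ` e \<subseteq> {2,0}" using True2 by auto
        show "{2,0} \<subseteq> ?f ` e" using True z True2 by (force intro: image_eqI)
      qed
      thus ?thesis by simp
    next
      case False2: False
      hence r: "e - {v} = r" using ve eE True by blast
      have "?f ` e = {2,1}"
      proof
        show "?f ` e \<subseteq> {2,1}" using r dis by auto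
        show "{2,1} \<subseteq> ?f ` e" using True z r dis by (force intro: image_eqI)
      qed
      thus ?thesis by simp
    qed
  next
    case False
    hence eW: "e \<subseteq> U \<union> r" using sub eE by blast
    obtain z where z: "z \<in> e" "z \<notin> U" using nU eE by blast
    have "\<not> e \<subseteq> r"
    proof
      assume "e \<subseteq> r"
      moreover have "finite r" using cr card.infinite by fastforce
      ultimately have "card e \<le> 2" using cr card_mono[of r e] by simp
      thus False using ce by simp
    qed
    then obtain y where y: "y \<in> e" "y \<notin> r" by blast
    have "?f ` e = {0,1}"
    proof
      show "?f ` e \<subseteq> {0,1}" using False by auto
      have "0 \<in> ?f ` e" using y eW False by (force intro: image_eqI)
      moreover have "1 \<in> ?f ` e" using z eW False by (force intro: image_eqI)
      ultimately show "{0,1} \<subseteq> ?f ` e" by blast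
    qed
    thus ?thesis by simp
  qed
  thus "1 < card (?f ` e) \<and> card (?f ` e) < card e" using ce by simp
qed

lemma seven_case:
  fixes E :: "'a set set"
  assumes dist: "distinct [v,a1,b1,a2,b2,a3,b3]"
    and sub: "\<forall>e\<in>E. e \<subseteq> {v,a1,b1,a2,b2,a3,b3}" and c3: "\<forall>e\<in>E. card e = 3"
    and ev: "\<forall>e\<in>E. v \<in> e \<longrightarrow> e = {v,a1,b1} \<or> e = {v,a2,b2} \<or> e = {v,a3,b3}"
    and e1: "{v,a1,b1} \<in> E" and e2: "{v,a2,b2} \<in> E" and e3: "{v,a3,b3} \<in> E"
    and fin: "finite E" and le9: "card E \<le> 9"
  shows "\<exists>f. proper_coloring E f"
proof (rule ccontr)
  assume nc: "\<not> (\<exists>f. proper_coloring E f)"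
  let ?W = "{a1,b1,a2,b2,a3,b3}"
  have sub': "\<forall>e\<in>E. e \<subseteq> insert v ?W" using sub by simp
  have vW: "v \<notin> ?W" using dist by simp
  have fW: "finite ?W" by simp
  have cl: "\<And>T. T \<subseteq> ?W \<Longrightarrow> card T = 3 \<Longrightarrow> card (?W - T) = 3 \<Longrightarrow>
        (\<forall>e\<in>E. v \<in> e \<longrightarrow> \<not> (e - {v} \<subseteq> T)) \<Longrightarrow> T \<in> E \<or> ?W - T \<in> E"
    using case1[OF sub' vW _ _ _ fW _ _ c3] nc by blast
  have t1: "{a1,a2,a3} \<in> E \<or> {b1,b2,b3} \<in> E"
  proof -
    have "?W - {a1,a2,a3} = {b1,b2,b3}" using dist by auto
    moreover have "\<forall>e\<in>E. v \<in> e \<longrightarrow> \<not> (e - {v} \<subseteq> {a1,a2,a3})" using ev dist by auto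
    ultimately show ?thesis using cl[of "{a1,a2,a3}"] dist by auto
  qed
  have t2: "{a1,a2,b3} \<in> E \<or> {b1,b2,a3} \<in> E"
  proof -
    have "?W - {a1,a2,b3} = {b1,b2,a3}" using dist by auto
    moreover have "\<forall>e\<in>E. v \<in> e \<longrightarrow> \<not> (e - {v} \<subseteq> {a1,a2,b3})" using ev dist by auto
    ultimately show ?thesis using cl[of "{a1,a2,b3}"] dist by auto
  qed
  have t3: "{a1,b2,a3} \<in> E \<or> {b1,a2,b3} \<in> E"
  proof -
    have "?W - {a1,b2,a3} = {b1,a2,b3}" using dist by auto
    moreover have "\<forall>e\<in>E. v \<in> e \<longrightarrow> \<not> (e - {v} \<subseteq> {a1,b2,a3})" using ev dist by auto
    ultimately show ?thesis using cl[of "{a1,b2,a3}"] dist by auto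
  qed
  have t4: "{a1,b2,b3} \<in> E \<or> {b1,a2,a3} \<in> E"
  proof -
    have "?W - {a1,b2,b3} = {b1,a2,a3}" using dist by auto
    moreover have "\<forall>e\<in>E. v \<in> e \<longrightarrow> \<not> (e - {v} \<subseteq> {a1,b2,b3})" using ev dist by auto
    ultimately show ?thesis using cl[of "{a1,b2,b3}"] dist by auto
  qed
  have cl2: "\<And>U r. ?W = U \<union> r \<Longrightarrow> U \<inter> r = {} \<Longrightarrow> card r = 2 \<Longrightarrow>
      (\<forall>e\<in>E. v \<in> e \<longrightarrow> (e - {v} \<subseteq> U \<or> e - {v} = r)) \<Longrightarrow> \<exists>e\<in>E. e \<subseteq> U"
  proof -
    fix U r assume a: "?W = U \<union> r" "U \<inter> r = {}" "card r = 2"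
      "\<forall>e\<in>E. v \<in> e \<longrightarrow> (e - {v} \<subseteq> U \<or> e - {v} = r)"
    show "\<exists>e\<in>E. e \<subseteq> U"
    proof (rule ccontr)
      assume "\<not> (\<exists>e\<in>E. e \<subseteq> U)"
      hence "proper_coloring E (\<lambda>z. if z = v then 2::nat else if z \<in> U then 0 else 1)"
        using case2[of E v U r] a sub' vW c3 by auto
      thus False using nc by blast
    qed
  qed
  obtain u1 where u1: "u1 \<in> E" "u1 \<subseteq> {a2,b2,a3,b3}"
    using cl2[of "{a2,b2,a3,b3}" "{a1,b1}"] dist ev by auto
  obtain u2 where u2: "u2 \<in> E" "u2 \<subseteq> {a1,b1,a3,b3}"
    using cl2[of "{a1,b1,a3,b3}" "{a2,b2}"] dist ev by auto
  obtain u3 where u3: "u3 \<in> E" "u3 \<subseteq> {a1,b1,a2,b2}"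
    using cl2[of "{a1,b1,a2,b2}" "{a3,b3}"] dist ev by auto
  have small: "\<And>u x y. card u = 3 \<Longrightarrow> u \<subseteq> insert x (insert y {}) \<Longrightarrow> False"
  proof -
    fix u x y assume "card u = 3" "u \<subseteq> insert x (insert y {})"
    hence "card u \<le> card {x,y}" using card_mono by (metis finite.emptyI finite.insertI)
    also have "\<dots> \<le> 2" by (simp add: card_insert_le_m1)
    finally show False using \<open>card u = 3\<close> by simp
  qed
  have u1m: "a2 \<in> u1 \<or> b2 \<in> u1" using small[of u1 a3 b3] c3 u1 by blast
  have u1n: "a3 \<in> u1 \<or> b3 \<in> u1" using small[of u1 a2 b2] c3 u1 by blast
  have u2m: "a1 \<in> u2 \<or> b1 \<in> u2" using small[of u2 a3 b3] c3 u2 by blast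
  have u2n: "a3 \<in> u2 \<or> b3 \<in> u2" using small[of u2 a1 b1] c3 u2 by blast
  have u3m: "a1 \<in> u3 \<or> b1 \<in> u3" using small[of u3 a2 b2] c3 u3 by blast
  have u3n: "a2 \<in> u3 \<or> b2 \<in> u3" using small[of u3 a1 b1] c3 u3 by blast
  obtain s1 where s1: "s1 \<in> E" "s1 = {a1,a2,a3} \<or> s1 = {b1,b2,b3}" using t1 by blast
  obtain s2 where s2: "s2 \<in> E" "s2 = {a1,a2,b3} \<or> s2 = {b1,b2,a3}" using t2 by blast
  obtain s3 where s3: "s3 \<in> E" "s3 = {a1,b2,a3} \<or> s3 = {b1,a2,b3}" using t3 by blast
  obtain s4 where s4: "s4 \<in> E" "s4 = {a1,b2,b3} \<or> s4 = {b1,a2,a3}" using t4 by blast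
  let ?L = "[{v,a1,b1},{v,a2,b2},{v,a3,b3},s1,s2,s3,s4,u1,u2,u3]"
  have vs: "v \<notin> s1" "v \<notin> s2" "v \<notin> s3" "v \<notin> s4" using dist s1(2) s2(2) s3(2) s4(2) by auto
  have vu: "v \<notin> u1" "v \<notin> u2" "v \<notin> u3" using dist u1(2) u2(2) u3(2) by auto
  have sig1: "(a1 \<in> s1 \<longleftrightarrow> a2 \<in> s1) \<and> (a1 \<in> s1 \<longleftrightarrow> a3 \<in> s1)" using dist s1(2) by auto
  have sig2: "(a1 \<in> s2 \<longleftrightarrow> a2 \<in> s2) \<and> \<not>(a1 \<in> s2 \<longleftrightarrow> a3 \<in> s2)" using dist s2(2) by auto
  have sig3: "\<not>(a1 \<in> s3 \<longleftrightarrow> a2 \<in> s3) \<and> (a1 \<in> s3 \<longleftrightarrow> a3 \<in> s3)" using dist s3(2) by auto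
  have sig4: "\<not>(a1 \<in> s4 \<longleftrightarrow> a2 \<in> s4) \<and> \<not>(a1 \<in> s4 \<longleftrightarrow> a3 \<in> s4)" using dist s4(2) by auto
  have sm: "\<forall>s\<in>{s1,s2,s3,s4}. (a1 \<in> s \<or> b1 \<in> s) \<and> (a2 \<in> s \<or> b2 \<in> s) \<and> (a3 \<in> s \<or> b3 \<in> s)"
    using s1(2) s2(2) s3(2) s4(2) by auto
  have un: "a1 \<notin> u1" "b1 \<notin> u1" "a2 \<notin> u2" "b2 \<notin> u2" "a3 \<notin> u3" "b3 \<notin> u3"
    using dist u1(2) u2(2) u3(2) by auto
  have dA: "distinct [{v,a1,b1},{v,a2,b2},{v,a3,b3}]" using dist by auto
  have dB: "distinct [s1,s2,s3,s4]" using sig1 sig2 sig3 sig4 by auto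
  have dC: "distinct [u1,u2,u3]" using un u2m u3m u3n by auto
  have AB: "set [{v,a1,b1},{v,a2,b2},{v,a3,b3}] \<inter> set ([s1,s2,s3,s4] @ [u1,u2,u3]) = {}"
    using vs vu by auto
  have BC: "set [s1,s2,s3,s4] \<inter> set [u1,u2,u3] = {}"
    using sm un by auto
  have "distinct ?L"
    using dA dB dC AB BC distinct_append[of "[{v,a1,b1},{v,a2,b2},{v,a3,b3}]" "[s1,s2,s3,s4] @ [u1,u2,u3]"]
      distinct_append[of "[s1,s2,s3,s4]" "[u1,u2,u3]"] by simp
  hence "card (set ?L) = 10" using distinct_card by fastforce
  moreover have "set ?L \<subseteq> E" using e1 e2 e3 s1 s2 s3 s4 u1 u2 u3 by simp
  ultimately have "10 \<le> card E" using card_mono[OF fin] by metis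
  thus False using le9 by simp
qed

lemma small_case:
  fixes E :: "nat set set"
  assumes fE: "finite E" and c3: "\<forall>e\<in>E. card e = 3" and le9: "card E \<le> 9"
    and fV: "finite (\<Union>E)" and c6: "card (\<Union>E) \<le> 6"
  shows "\<exists>f. proper_coloring E f"
proof -
  define V where "V = \<Union>E"
  have "infinite (UNIV - V)" using fV V_def by (simp add: infinite_UNIV_nat Diff_infinite_finite)
  then obtain A where A: "finite A" "card A = 6 - card V" "A \<subseteq> UNIV - V"
    using infinite_arbitrarily_large by blast
  define W where "W = V \<union> A"
  have fW: "finite W" using W_def A fV V_def by simp
  have cW: "card W = 6" using W_def A fV V_def c6 card_Un_disjoint[of V A] by auto
  have eW: "\<forall>e\<in>E. e \<subseteq> W" using W_def V_def by auto
  define T3 where "T3 = {T. T \<subseteq> W \<and> card T = 3}"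
  have cT3: "card T3 = 20" using n_subsets[OF fW, of 3] cW T3_def by (simp add: numeral_eq_Suc)
  have "\<exists>T\<in>T3. T \<notin> E \<and> W - T \<notin> E"
  proof (rule ccontr)
    assume "\<not> ?thesis"
    hence "T3 \<subseteq> E \<union> (\<lambda>S. W - S) ` E"
    proof -
      assume h: "\<not> (\<exists>T\<in>T3. T \<notin> E \<and> W - T \<notin> E)"
      show ?thesis
      proof
        fix T assume "T \<in> T3"
        hence "T \<in> E \<or> W - T \<in> E" using h by blast
        moreover have "T = W - (W - T)" using \<open>T \<in> T3\<close> T3_def by auto
        ultimately show "T \<in> E \<union> (\<lambda>S. W - S) ` E" by blast
      qed
    qed
    hence "card T3 \<le> card (E \<union> (\<lambda>S. W - S) ` E)" using fE by (simp add: card_mono)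
    also have "\<dots> \<le> card E + card ((\<lambda>S. W - S) ` E)" by (rule card_Un_le)
    also have "\<dots> \<le> card E + card E" using card_image_le[OF fE] by simp
    finally show False using cT3 le9 by simp
  qed
  then obtain T where T: "T \<subseteq> W" "card T = 3" "T \<notin> E" "W - T \<notin> E" using T3_def by blast
  have cWT: "card (W - T) = 3" using T cW fW by (simp add: card_Diff_subset finite_subset)
  define f where "f = (\<lambda>z. if z \<in> T then 0::nat else 1)"
  have "proper_coloring E f"
    unfolding proper_coloring_def
  proof
    fix e assume eE: "e \<in> E"
    have ce: "card e = 3" using c3 eE by blast
    have "\<not> e \<subseteq> W - T"
    proof
      assume "e \<subseteq> W - T"
      hence "e = W - T" using card_subset_eq[of "W - T" e] fW ce cWT by auto
      thus False using T eE by blast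
    qed
    then obtain z where z: "z \<in> e" "z \<in> T" using eW eE by blast
    have "\<not> e \<subseteq> T"
    proof
      assume "e \<subseteq> T"
      hence "e = T" using card_subset_eq[of T e] fW T ce finite_subset by metis
      thus False using T eE by blast
    qed
    then obtain y where y: "y \<in> e" "y \<notin> T" by blast
    have "f ` e = {0,1}"
    proof
      show "f ` e \<subseteq> {0,1}" unfolding f_def by auto
      have "0 \<in> f ` e" using z unfolding f_def by force
      moreover have "1 \<in> f ` e" using y unfolding f_def by force
      ultimately show "{0,1} \<subseteq> f ` e" by blast
    qed
    thus "1 < card (f ` e) \<and> card (f ` e) < card e" using ce by simp
  qed
  thus ?thesis by blast
qed

lemma nonempty_of_card: "0 < card A \<Longrightarrow> A \<noteq> {}" by auto

lemma main_lb:
  fixes E :: "nat set set"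
  assumes "finite E" "\<forall>e\<in>E. card e = 3" "card E \<le> 9"
  shows "\<exists>f. proper_coloring E f"
  using assms
proof (induction "card (\<Union>E)" arbitrary: E rule: less_induct)
  case less
  define V where "V = \<Union>E"
  have fe: "\<forall>e\<in>E. finite e" using less.prems(2) card.infinite by fastforce
  have fV: "finite V" using V_def less.prems(1) fe by auto
  have eV: "\<forall>e\<in>E. e \<subseteq> V" using V_def by auto
  show ?case
  proof (cases "\<exists>x\<in>V. \<exists>y\<in>V. x \<noteq> y \<and> (\<forall>e\<in>E. \<not> (x\<in>e \<and> y\<in>e))")
    case True
    then obtain x y where xy: "x\<in>V" "y\<in>V" "x\<noteq>y" "\<forall>e\<in>E. \<not>(x\<in>e \<and> y\<in>e)" by blast
    define \<phi> where "\<phi> = (\<lambda>z. if z = y then x else z)"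
    define E' where "E' = (\<lambda>e. \<phi> ` e) ` E"
    have inj: "\<forall>e\<in>E. inj_on \<phi> e" using xy unfolding inj_on_def \<phi>_def by auto
    have c3': "\<forall>e'\<in>E'. card e' = 3" using inj less.prems(2) unfolding E'_def by (auto simp: card_image)
    have fE': "finite E'" using less.prems(1) E'_def by simp
    have cE': "card E' \<le> 9" using card_image_le[OF less.prems(1), of "\<lambda>e. \<phi> ` e"] less.prems(3) E'_def by simp
    have "\<Union>E' = \<phi> ` V" unfolding E'_def V_def by auto
    also have "\<phi> ` V = V - {y}" unfolding \<phi>_def using xy(1,3) by auto
    finally have U: "\<Union>E' = V - {y}" .
    have "card (\<Union>E') < card (\<Union>E)" using U fV xy(2) V_def card_Diff1_less by metis
    then obtain f' where f': "proper_coloring E' f'" using less.hyps[OF _ fE' c3' cE'] by blast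
    have "proper_coloring E (f' \<circ> \<phi>)"
      unfolding proper_coloring_def
    proof
      fix e assume eE: "e\<in>E"
      hence "\<phi> ` e \<in> E'" "card (\<phi>`e) = card e" using E'_def inj card_image by auto
      moreover have "(f' \<circ> \<phi>) ` e = f' ` (\<phi> ` e)" by (simp add: image_comp)
      ultimately show "1 < card ((f' \<circ> \<phi>) ` e) \<and> card ((f' \<circ> \<phi>) ` e) < card e"
        using f' unfolding proper_coloring_def by metis
    qed
    thus ?thesis by blast
  next
    case False
    hence cov: "\<forall>x\<in>V. \<forall>y\<in>V. x \<noteq> y \<longrightarrow> (\<exists>e\<in>E. x\<in>e \<and> y\<in>e)" by blast
    consider "card V \<le> 6" | "card V = 7" | "card V \<ge> 8" by linarith
    thus ?thesis
    proof cases
      case 1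
      thus ?thesis using small_case[OF less.prems] fV V_def by blast
    next
      case 3
      let ?P = "{p. p \<subseteq> V \<and> card p = 2}"
      let ?Q = "(\<Union>e\<in>E. {p. p \<subseteq> e \<and> card p = 2})"
      have cP: "card ?P = card V choose 2" by (rule n_subsets[OF fV])
      have "8 * 7 \<le> card V * (card V - 1)" using 3 by (intro mult_le_mono) auto
      hence "28 \<le> card V choose 2" by (simp add: choose_two)
      have PQ: "?P \<subseteq> ?Q"
      proof
        fix p assume "p \<in> ?P"
        then obtain a b where ab: "p = {a,b}" "a \<noteq> b" "a \<in> V" "b \<in> V" using card_2_iff[of p] by auto
        then obtain e where "e\<in>E" "a\<in>e" "b\<in>e" using cov by blast
        thus "p \<in> ?Q" using ab \<open>p \<in> ?P\<close> by auto
      qed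
      have fQ: "finite ?Q" using less.prems(1) fe by auto
      have "card ?Q \<le> (\<Sum>e\<in>E. card {p. p \<subseteq> e \<and> card p = 2})" by (rule card_UN_le[OF less.prems(1)])
      also have "\<dots> = (\<Sum>e\<in>E. 3)"
      proof (rule sum.cong)
        fix e assume "e \<in> E"
        thus "card {p. p \<subseteq> e \<and> card p = 2} = 3" using n_subsets[of e 2] fe less.prems(2)
          by (simp add: choose_two)
      qed simp
      also have "\<dots> = 3 * card E" by simp
      finally have "card ?Q \<le> 27" using less.prems(3) by simp
      moreover have "card ?P \<le> card ?Q" using PQ fQ card_mono by blast
      ultimately show ?thesis using cP \<open>28 \<le> card V choose 2\<close> by simp
    next
      case 2
      have "\<exists>v\<in>V. card {e\<in>E. v\<in>e} \<le> 3"
      proof (rule ccontr)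
        assume "\<not> ?thesis"
        hence "\<And>z. z \<in> V \<Longrightarrow> 4 \<le> card {e\<in>E. z\<in>e}" by force
        hence "card V * 4 \<le> (\<Sum>z\<in>V. card {e\<in>E. z\<in>e})" using sum_bounded_below[of V "4::nat" "\<lambda>z. card {e\<in>E. z\<in>e}"] by simp
        also have "\<dots> = (\<Sum>e\<in>E. card e)" by (rule double_count[OF fV less.prems(1) eV])
        also have "\<dots> = 3 * card E" using less.prems(2) by simp
        finally show False using 2 less.prems(3) by simp
      qed
      then obtain v where v: "v \<in> V" "card {e\<in>E. v\<in>e} \<le> 3" by blast
      define D where "D = {e\<in>E. v\<in>e}"
      have fD: "finite D" using D_def less.prems(1) by simp
      have c3: "\<forall>e\<in>E. card e = 3" using less.prems(2) .
      have "card (V - {v}) = 6" using 2 v fV by simp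
      hence "V - {v} \<noteq> {}" using nonempty_of_card[of "V - {v}"] by simp
      then obtain a1 where a1: "a1 \<in> V" "a1 \<noteq> v" by blast
      have "\<exists>e\<in>E. v \<in> e \<and> a1 \<in> e" using cov v(1) a1(1) a1(2) by blast
      then obtain e1 where e1: "e1 \<in> E" "v \<in> e1" "a1 \<in> e1" by blast
      have "card e1 = 3" using c3 e1(1) by blast
      from card3_split[OF this e1(2,3)] a1(2) obtain b1 where b1: "e1 = {v,a1,b1}" "b1 \<noteq> v" "b1 \<noteq> a1" by blast
      have "b1 \<in> e1" using b1(1) by simp
      hence b1V: "b1 \<in> V" using eV e1(1) by blast
      have S1: "{v,a1,b1} \<subseteq> V" using v a1 b1V by simp
      have "card (V - {v,a1,b1}) = card V - card {v,a1,b1}" by (rule card_Diff_subset) (use S1 in auto)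
      moreover have "card {v,a1,b1} \<le> 3" using card_length[of "[v,a1,b1]"] by simp
      ultimately have "card (V - {v,a1,b1}) \<ge> 4" using 2 by linarith
      hence "V - {v,a1,b1} \<noteq> {}" using nonempty_of_card[of "V - {v,a1,b1}"] by simp
      then obtain a2 where a2: "a2 \<in> V" "a2 \<notin> {v,a1,b1}" by blast
      have a2v: "a2 \<noteq> v" using a2 by blast
      have "\<exists>e\<in>E. v \<in> e \<and> a2 \<in> e" using cov v(1) a2(1) a2v by blast
      then obtain e2 where e2: "e2 \<in> E" "v \<in> e2" "a2 \<in> e2" by blast
      have "card e2 = 3" using c3 e2(1) by blast
      from card3_split[OF this e2(2,3)] a2v obtain b2 where b2: "e2 = {v,a2,b2}" "b2 \<noteq> v" "b2 \<noteq> a2" by blast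
      have "b2 \<in> e2" using b2(1) by simp
      hence b2V: "b2 \<in> V" using eV e2(1) by blast
      have S2: "{v,a1,b1,a2,b2} \<subseteq> V" using v a1 b1V a2 b2V by simp
      have "card (V - {v,a1,b1,a2,b2}) = card V - card {v,a1,b1,a2,b2}" by (rule card_Diff_subset) (use S2 in auto)
      moreover have "card {v,a1,b1,a2,b2} \<le> 5" using card_length[of "[v,a1,b1,a2,b2]"] by simp
      ultimately have "card (V - {v,a1,b1,a2,b2}) \<ge> 2" using 2 by linarith
      hence "V - {v,a1,b1,a2,b2} \<noteq> {}" using nonempty_of_card[of "V - {v,a1,b1,a2,b2}"] by simp
      then obtain a3 where a3: "a3 \<in> V" "a3 \<notin> {v,a1,b1,a2,b2}" by blast
      have a3v: "a3 \<noteq> v" using a3 by blast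
      have "\<exists>e\<in>E. v \<in> e \<and> a3 \<in> e" using cov v(1) a3(1) a3v by blast
      then obtain e3 where e3: "e3 \<in> E" "v \<in> e3" "a3 \<in> e3" by blast
      have "card e3 = 3" using c3 e3(1) by blast
      from card3_split[OF this e3(2,3)] a3v obtain b3 where b3: "e3 = {v,a3,b3}" "b3 \<noteq> v" "b3 \<noteq> a3" by blast
      have "b3 \<in> e3" using b3(1) by simp
      hence b3V: "b3 \<in> V" using eV e3(1) by blast
      have dis123: "e1 \<noteq> e2" "e1 \<noteq> e3" "e2 \<noteq> e3" using b1 b2 b3 a2 a3 e2 e3 by auto
      have sD: "{e1,e2,e3} \<subseteq> D" using D_def e1 e2 e3 by auto
      have c123: "card {e1,e2,e3} = 3" using dis123 by simp
      have "card D \<le> 3" using v D_def by simp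
      moreover have "3 \<le> card D" using card_mono[OF fD sD] c123 by simp
      ultimately have DD: "D = {e1,e2,e3}" using card_subset_eq[OF fD sD] c123 by simp
      let ?L = "[v,a1,b1,a2,b2,a3,b3]"
      have VL: "V = set ?L"
      proof
        show "set ?L \<subseteq> V" using v a1 b1V a2 b2V a3 b3V by simp
        show "V \<subseteq> set ?L"
        proof
          fix w assume "w \<in> V"
          show "w \<in> set ?L"
          proof (cases "w = v")
            case False
            then obtain e where "e\<in>E" "v\<in>e" "w\<in>e" using cov v \<open>w\<in>V\<close> by metis
            hence "e \<in> D" using D_def by simp
            thus ?thesis using DD b1 b2 b3 \<open>w\<in>e\<close> by auto
          qed simp
        qed
      qed
      have dL: "distinct ?L"
      proof (rule card_distinct)
        have c7: "card (set ?L) = 7" using 2 unfolding VL .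
        show "card (set ?L) = length ?L" by (subst c7) simp
      qed
      have subL: "\<forall>e\<in>E. e \<subseteq> {v,a1,b1,a2,b2,a3,b3}" using eV VL by simp
      have evL: "\<forall>e\<in>E. v \<in> e \<longrightarrow> e = {v,a1,b1} \<or> e = {v,a2,b2} \<or> e = {v,a3,b3}"
        using DD D_def b1 b2 b3 by blast
      have E1: "{v,a1,b1} \<in> E" using e1 b1 by simp
      have E2: "{v,a2,b2} \<in> E" using e2 b2 by simp
      have E3: "{v,a3,b3} \<in> E" using e3 b3 by simp
      show ?thesis by (rule seven_case[OF dL subL c3 evL E1 E2 E3 less.prems(1) less.prems(3)])
    qed
  qed
qed

abbreviation "V5 \<equiv> {0,1,2,3,4::nat}"
abbreviation "E5 \<equiv> {T. T \<subseteq> V5 \<and> card T = 3}"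

lemma K5_card: "card E5 = 10"
  using n_subsets[of V5 3] by (simp add: numeral_eq_Suc)

lemma pigeon3:
  fixes f :: "'a \<Rightarrow> 'b"
  assumes fA: "finite A" and im: "card (f ` A) \<le> 2" and cA: "5 \<le> card A"
  shows "\<exists>c. 3 \<le> card {x\<in>A. f x = c}"
proof (rule ccontr)
  assume "\<not> ?thesis"
  hence nn: "\<And>c. \<not> 3 \<le> card {x\<in>A. f x = c}" by blast
  have le2: "card {x\<in>A. f x = c} \<le> 2" for c using nn[of c] by linarith
  have "A = (\<Union>c\<in>f ` A. {x\<in>A. f x = c})" by blast
  hence "card A \<le> (\<Sum>c\<in>f ` A. card {x\<in>A. f x = c})"
    using card_UN_le[of "f ` A" "\<lambda>c. {x\<in>A. f x = c}"] fA by simp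
  also have "\<dots> \<le> (\<Sum>c\<in>f ` A. 2)" by (rule sum_mono) (use le2 in blast)
  also have "\<dots> = 2 * card (f ` A)" by simp
  finally show False using im cA by linarith
qed

lemma K5_uncol: "\<not> proper_coloring E5 f"
proof
  assume pc: "proper_coloring E5 f"
  hence pc': "\<And>e. e \<in> E5 \<Longrightarrow> 1 < card (f ` e) \<and> card (f ` e) < card e"
    unfolding proper_coloring_def by blast
  show False
  proof (cases "3 \<le> card (f ` V5)")
    case True
    then obtain S where S: "S \<subseteq> f ` V5" "card S = 3" "finite S" by (rule obtain_subset_with_card_n)
    from S(2) obtain c1 c2 c3 where c: "S = {c1,c2,c3}" "c1 \<noteq> c2" "c2 \<noteq> c3" "c1 \<noteq> c3"
      unfolding card_3_iff by blast
    have "c1 \<in> f ` V5" using S(1) c(1) by blast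
    then obtain x1 where x1: "x1 \<in> V5" "f x1 = c1" by (rule imageE) simp
    have "c2 \<in> f ` V5" using S(1) c(1) by blast
    then obtain x2 where x2: "x2 \<in> V5" "f x2 = c2" by (rule imageE) simp
    have "c3 \<in> f ` V5" using S(1) c(1) by blast
    then obtain x3 where x3: "x3 \<in> V5" "f x3 = c3" by (rule imageE) simp
    have d1: "x1 \<noteq> x2" using x1(2) x2(2) c(2) by metis
    have d2: "x2 \<noteq> x3" using x2(2) x3(2) c(3) by metis
    have d3: "x1 \<noteq> x3" using x1(2) x3(2) c(4) by metis
    have sub: "{x1,x2,x3} \<subseteq> V5" using x1(1) x2(1) x3(1) by (simp only: insert_subset empty_subsetI simp_thms)
    have c3: "card {x1,x2,x3} = 3" using d1 d2 d3 by simp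
    have T: "{x1,x2,x3} \<in> E5" using sub c3 by (simp only: mem_Collect_eq simp_thms)
    have "f ` {x1,x2,x3} = {c1,c2,c3}" using x1(2) x2(2) x3(2) by simp
    hence "card (f ` {x1,x2,x3}) = 3" using S c(1) by simp
    thus False using pc'[OF T] c3 by linarith
  next
    case False
    have "\<exists>c. 3 \<le> card {x\<in>V5. f x = c}"
      by (rule pigeon3) (use False in simp_all)
    then obtain c where "3 \<le> card {x\<in>V5. f x = c}" by blast
    then obtain T where T: "T \<subseteq> {x\<in>V5. f x = c}" "card T = 3" "finite T" by (rule obtain_subset_with_card_n)
    have "T \<noteq> {}" using T(2) by (metis card.empty zero_neq_numeral)
    hence "f ` T = {c}" using T(1) by blast
    moreover have "T \<subseteq> V5" using T(1) by blast
    hence "T \<in> E5" using T(2) by blast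
    ultimately show False using pc'[of T] by simp
  qed
qed


lemma K5_bi: "bi_hypergraph V5 E5"
  unfolding bi_hypergraph_def
proof (intro conjI ballI impI)
  fix e e' assume "e \<in> E5" "e' \<in> E5" "e \<subseteq> e'"
  moreover have "finite e'" using \<open>e' \<in> E5\<close> finite_subset by blast
  ultimately show "e = e'" using card_subset_eq[of e' e] by simp
qed auto

lemma K5_min:
  assumes "subhypergraph V' E' V5 E5" "(V', E') \<noteq> (V5, E5)"
  shows "colorable V' E'"
proof -
  have bi: "bi_hypergraph V' E'" and VV: "V' \<subseteq> V5" and EE: "E' \<subseteq> E5"
    using assms(1) unfolding subhypergraph_def by auto
  have "E' \<noteq> E5"
  proof
    assume eq: "E' = E5"
    have "{0,1,2} \<in> E'" "{2,3,4} \<in> E'" using eq by auto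
    hence "{0,1,2} \<subseteq> V'" "{2,3,4} \<subseteq> V'" using bi unfolding bi_hypergraph_def by auto
    hence "V' = V5" using VV by auto
    thus False using eq assms(2) by simp
  qed
  then obtain T where T: "T \<in> E5" "T \<notin> E'" using EE by blast
  define f where "f = (\<lambda>z. if z \<in> T then 0::nat else 1)"
  have "proper_coloring E' f"
    unfolding proper_coloring_def
  proof
    fix e assume "e \<in> E'"
    hence eE: "e \<in> E5" and neT: "e \<noteq> T" using EE T by auto
    have fe: "finite e" "finite T" using eE T finite_subset by auto
    have ce: "card e = 3" "card T = 3" using eE T by auto
    have "card (e \<union> T) \<le> 5" using eE T card_mono[of V5 "e \<union> T"] by auto
    hence "card (e \<inter> T) \<noteq> 0" using card_Un_Int[OF fe] ce by simp
    then obtain z where z: "z \<in> e" "z \<in> T" by (metis card.empty disjoint_iff)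
    have "\<not> e \<subseteq> T"
    proof
      assume "e \<subseteq> T"
      hence "e = T" using card_subset_eq[of T e] fe ce by simp
      thus False using neT by simp
    qed
    then obtain y where y: "y \<in> e" "y \<notin> T" by blast
    have "f ` e = {0,1}"
    proof
      show "f ` e \<subseteq> {0,1}" unfolding f_def by auto
      have "0 \<in> f ` e" using z unfolding f_def by force
      moreover have "1 \<in> f ` e" using y unfolding f_def by force
      ultimately show "{0,1} \<subseteq> f ` e" by blast
    qed
    thus "1 < card (f ` e) \<and> card (f ` e) < card e" using ce by simp
  qed
  thus ?thesis unfolding colorable_def by blast
qed

theorem theorem1p2:
  shows "m_min 3 = 10"
  unfolding m_min_def
proof (rule Least_equality)
  show "0 < (10::nat) \<and> (\<exists>(V :: nat set) E. minimal_uncolorable V E \<and> uniform 3 E \<and> card E = 10)"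
  proof (intro conjI exI)
    show "minimal_uncolorable V5 E5"
      unfolding minimal_uncolorable_def colorable_def
      using K5_bi K5_uncol K5_min unfolding colorable_def by blast
    show "uniform 3 E5" unfolding uniform_def by auto
    show "card E5 = 10" by (rule K5_card)
  qed simp
next
  fix m assume "0 < m \<and> (\<exists>(V :: nat set) E. minimal_uncolorable V E \<and> uniform 3 E \<and> card E = m)"
  then obtain V :: "nat set" and E where h: "0 < m" "minimal_uncolorable V E" "uniform 3 E" "card E = m" by blast
  show "10 \<le> m"
  proof (rule ccontr)
    assume "\<not> 10 \<le> m"
    hence "card E \<le> 9" using h by simp
    moreover have "finite E" using h card_ge_0_finite by metis
    moreover have "\<forall>e\<in>E. card e = 3" using h(3) unfolding uniform_def .
    ultimately obtain f where "proper_coloring E f" using main_lb by blast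
    thus False using h(2) unfolding minimal_uncolorable_def colorable_def by blast
  qed
qed

end
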